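(* Let $g\ge2$ and $n\ge2$. Regarding $P_{g,n}(a_1,\dots,a_n)$ as a polynomial in $a_1,\dots,a_n$, we have $P_{g,n}|_{a_i=0}\equiv0$ identically (as a polynomial in the remaining variables) for each $i=1,\dots,n$.
   Context: For $g\ge2$, $n\ge1$, $$P_{g,n}(a_1,\dots,a_n):=\sum_{k=1}^n\frac{(-1)^k(2g-3+k)!}{k!}\sum_{(I_1,\dots,I_k)}\ \sum_{\substack{d_1,\dots,d_k\in\mathbb{Z}_{\ge0}\\ d_1+\cdots+d_k=g-2+n}}\prod_{j=1}^k\binom{2a_{[I_j]}+1}{2d_j}\prod_{i=1}^{|I_j|-1}(2d_j+1-2i),$$ where $(I_1,\dots,I_k)$ runs over ordered $k$-tuples of nonempty pairwise disjoint subsets of $\{1,\dots,n\}$ with union $\{1,\dots,n\}$, $a_{[I]}:=\sum_{\ell\in I}a_\ell$, and $\binom{x}{m}:=x(x-1)\cdots(x-m+1)/m!$ for $m\ge0$, a polynomial in $x$. *)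

theory Defs
  imports Complex_Main
begin

definition ordered_set_partitions :: "nat \<Rightarrow> nat \<Rightarrow> nat set list set" where
  "ordered_set_partitions n k =
     {Is. length Is = k \<and> (\<forall>j<k. Is ! j \<noteq> {})
        \<and> (\<forall>i<k. \<forall>j<k. i \<noteq> j \<longrightarrow> Is ! i \<inter> Is ! j = {})
        \<and> \<Union>(set Is) = {1..n}}"

definition weak_compositions :: "nat \<Rightarrow> nat \<Rightarrow> nat list set" where
  "weak_compositions k m = {ds. length ds = k \<and> sum_list ds = m}"

text \<open>P_{g,n}(a_1,...,a_n), evaluated at real values a_1,...,a_n (given by a :: nat => real;
  values of a outside {1..n} are irrelevant).\<close>
definition P :: "nat \<Rightarrow> nat \<Rightarrow> (nat \<Rightarrow> real) \<Rightarrow> real" where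
  "P g n a =
    (\<Sum>k=1..n. (-1)^k * fact (2*g - 3 + k) / fact k *
      (\<Sum>Is\<in>ordered_set_partitions n k.
         \<Sum>ds\<in>weak_compositions k (g - 2 + n).
           \<Prod>j<k. ((2 * (\<Sum>l\<in>Is ! j. a l) + 1) gchoose (2 * ds ! j))
                   * (\<Prod>i=1..card (Is ! j) - 1. (of_nat (2 * ds ! j + 1) - 2 * of_nat i))))"

end

theory Submission
  imports Defs
begin

definition ins :: "nat \<Rightarrow> 'b \<Rightarrow> 'b list \<Rightarrow> 'b list" where
  "ins p x xs = take p xs @ x # drop p xs"

definition rmv :: "nat \<Rightarrow> 'b list \<Rightarrow> 'b list" where
  "rmv p xs = take p xs @ drop (Suc p) xs"

lemma length_ins[simp]: "p \<le> length xs \<Longrightarrow> length (ins p x xs) = Suc (length xs)"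
  by (simp add: ins_def)

lemma nth_ins: "p \<le> length xs \<Longrightarrow> j \<le> length xs \<Longrightarrow>
  ins p x xs ! j = (if j < p then xs ! j else if j = p then x else xs ! (j - 1))"
  by (auto simp: ins_def nth_append min_def)

lemma set_ins: "set (ins p x xs) = insert x (set xs)"
proof -
  have "set xs = set (take p xs) \<union> set (drop p xs)"
    by (metis append_take_drop_id set_append)
  then show ?thesis by (auto simp: ins_def)
qed

lemma length_rmv[simp]: "p < length xs \<Longrightarrow> length (rmv p xs) = length xs - 1"
  by (simp add: rmv_def)

lemma nth_rmv: "p < length xs \<Longrightarrow> j < length xs - 1 \<Longrightarrow>
  rmv p xs ! j = (if j < p then xs ! j else xs ! Suc j)"
  by (auto simp: rmv_def nth_append min_def)

lemma ins_rmv: "p < length xs \<Longrightarrow> ins p (xs ! p) (rmv p xs) = xs"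
  by (simp add: ins_def rmv_def id_take_nth_drop[symmetric] min_def)

lemma rmv_ins: "p \<le> length xs \<Longrightarrow> rmv p (ins p x xs) = xs"
  by (simp add: ins_def rmv_def min_def)

lemma nth_ins_self: "p \<le> length xs \<Longrightarrow> ins p x xs ! p = x"
  by (simp add: ins_def nth_append min_def)


definition osp :: "nat set \<Rightarrow> nat \<Rightarrow> nat set list set" where
  "osp S k = {Is. length Is = k \<and> (\<forall>j<k. Is ! j \<noteq> {})
        \<and> (\<forall>i<k. \<forall>j<k. i \<noteq> j \<longrightarrow> Is ! i \<inter> Is ! j = {})
        \<and> \<Union>(set Is) = S}"

lemma osp_n: "ordered_set_partitions n k = osp {1..n} k"
  by (simp add: ordered_set_partitions_def osp_def)

lemma osp_sub: "Is \<in> osp S k \<Longrightarrow> j < k \<Longrightarrow> Is ! j \<subseteq> S"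
  unfolding osp_def by auto

lemma osp_cover: "Is \<in> osp S k \<Longrightarrow> x \<in> S \<Longrightarrow> \<exists>j<k. x \<in> Is ! j"
  unfolding osp_def by (auto simp: in_set_conv_nth)

lemma osp_finite: "finite S \<Longrightarrow> finite (osp S k)"
proof -
  assume "finite S"
  have "osp S k \<subseteq> {xs. set xs \<subseteq> Pow S \<and> length xs = k}"
    unfolding osp_def by auto
  moreover have "finite {xs. set xs \<subseteq> Pow S \<and> length xs = k}"
    using \<open>finite S\<close> by (intro finite_lists_length_eq) auto
  ultimately show ?thesis by (rule finite_subset)
qed

definition pos :: "nat \<Rightarrow> nat set list \<Rightarrow> nat" where
  "pos i Is = (THE j. j < length Is \<and> i \<in> Is ! j)"

lemma pos_eq: "Is \<in> osp S k \<Longrightarrow> p < k \<Longrightarrow> i \<in> Is ! p \<Longrightarrow> pos i Is = p"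
  unfolding pos_def osp_def by (rule the_equality) auto

lemma ins_osp:
  assumes "Js \<in> osp R k" "p \<le> k" "i \<notin> R"
  shows "ins p {i} Js \<in> osp (insert i R) (Suc k)"
proof -
  have L: "length Js = k" using assms(1) by (simp add: osp_def)
  have sub: "\<And>j. j < k \<Longrightarrow> i \<notin> Js ! j" using osp_sub[OF assms(1)] assms(3) by blast
  have ne: "\<And>j. j < k \<Longrightarrow> Js ! j \<noteq> {}" using assms(1) by (simp add: osp_def)
  have dj: "\<And>a b. a < k \<Longrightarrow> b < k \<Longrightarrow> a \<noteq> b \<Longrightarrow> Js ! a \<inter> Js ! b = {}"
    using assms(1) by (simp add: osp_def)
  have U: "\<Union>(set Js) = R" using assms(1) by (simp add: osp_def)
  show ?thesis unfolding osp_def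
  proof (intro CollectI conjI allI impI)
    show "length (ins p {i} Js) = Suc k" using L assms(2) by simp
    show "ins p {i} Js ! j \<noteq> {}" if "j < Suc k" for j
      using that ne L assms(2) by (auto simp: nth_ins)
    show "ins p {i} Js ! a \<inter> ins p {i} Js ! b = {}" if "a < Suc k" "b < Suc k" "a \<noteq> b" for a b
    proof -
      have A: "ins p {i} Js ! a = (if a < p then Js ! a else if a = p then {i} else Js ! (a - 1))"
        using that L assms(2) by (simp add: nth_ins)
      have B: "ins p {i} Js ! b = (if b < p then Js ! b else if b = p then {i} else Js ! (b - 1))"
        using that L assms(2) by (simp add: nth_ins)
      show ?thesis unfolding A B using that sub dj assms(2)
        by (auto split: if_splits; metis One_nat_def Suc_pred diff_less_Suc le_less_trans less_Suc_eq_0_disj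
             less_imp_diff_less nat_neq_iff not_less_eq)
    qed
    show "\<Union>(set (ins p {i} Js)) = insert i R" using U by (simp add: set_ins)
  qed
qed


lemma rmv_osp:
  assumes "Is \<in> osp (insert i R) (Suc k)" "p < Suc k" "Is ! p = {i}" "i \<notin> R"
  shows "rmv p Is \<in> osp R k"
proof -
  have L: "length Is = Suc k" using assms(1) by (simp add: osp_def)
  have ne: "\<And>j. j < Suc k \<Longrightarrow> Is ! j \<noteq> {}" using assms(1) by (simp add: osp_def)
  have dj: "\<And>a b. a < Suc k \<Longrightarrow> b < Suc k \<Longrightarrow> a \<noteq> b \<Longrightarrow> Is ! a \<inter> Is ! b = {}"
    using assms(1) by (simp add: osp_def)
  have sub: "\<And>j. j < Suc k \<Longrightarrow> Is ! j \<subseteq> insert i R" using osp_sub[OF assms(1)] by blast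
  have N: "\<And>j. j < k \<Longrightarrow> rmv p Is ! j = (if j < p then Is ! j else Is ! Suc j)"
    using L assms(2) by (simp add: nth_rmv)
  show ?thesis unfolding osp_def
  proof (intro CollectI conjI allI impI)
    show "length (rmv p Is) = k" using L assms(2) by simp
    show "rmv p Is ! j \<noteq> {}" if "j < k" for j using that N ne by simp
    show "rmv p Is ! a \<inter> rmv p Is ! b = {}" if "a < k" "b < k" "a \<noteq> b" for a b
      using that N dj by (auto split: if_splits)
    show "\<Union>(set (rmv p Is)) = R"
    proof
      show "\<Union>(set (rmv p Is)) \<subseteq> R"
      proof
        fix x assume "x \<in> \<Union>(set (rmv p Is))"
        then obtain j where j: "j < k" "x \<in> rmv p Is ! j"
          using L assms(2) by (auto simp: in_set_conv_nth)
        define j' where "j' = (if j < p then j else Suc j)"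
        have "j' < Suc k" "j' \<noteq> p" "x \<in> Is ! j'" using j N unfolding j'_def by auto
        then have "x \<in> insert i R" "x \<notin> Is ! p" using sub dj assms(2) by blast+
        then show "x \<in> R" using assms(3) by auto
      qed
      show "R \<subseteq> \<Union>(set (rmv p Is))"
      proof
        fix x assume x: "x \<in> R"
        then obtain j where j: "j < Suc k" "x \<in> Is ! j" using osp_cover[OF assms(1)] by blast
        have "j \<noteq> p" using x j assms(3,4) by auto
        define j' where "j' = (if j < p then j else j - 1)"
        have "j' < k" using j \<open>j \<noteq> p\<close> assms(2) unfolding j'_def by auto
        moreover have "rmv p Is ! j' = Is ! j" using N[OF \<open>j' < k\<close>] \<open>j \<noteq> p\<close> unfolding j'_def by auto
        moreover have "j' < length (rmv p Is)" using \<open>j' < k\<close> L assms(2) by simp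
        ultimately have "rmv p Is ! j' \<in> set (rmv p Is)" "x \<in> rmv p Is ! j'"
          using j by (metis nth_mem, simp)
        then show "x \<in> \<Union>(set (rmv p Is))" by blast
      qed
    qed
  qed
qed

lemma upd_osp:
  assumes "Js \<in> osp R k" "p < k" "i \<notin> R"
  shows "Js[p := insert i (Js ! p)] \<in> osp (insert i R) k"
proof -
  have L: "length Js = k" using assms(1) by (simp add: osp_def)
  have sub: "\<And>j. j < k \<Longrightarrow> i \<notin> Js ! j" using osp_sub[OF assms(1)] assms(3) by blast
  have ne: "\<And>j. j < k \<Longrightarrow> Js ! j \<noteq> {}" using assms(1) by (simp add: osp_def)
  have dj: "\<And>a b. a < k \<Longrightarrow> b < k \<Longrightarrow> a \<noteq> b \<Longrightarrow> Js ! a \<inter> Js ! b = {}"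
    using assms(1) by (simp add: osp_def)
  have U: "\<Union>(set Js) = R" using assms(1) by (simp add: osp_def)
  show ?thesis unfolding osp_def
  proof (intro CollectI conjI allI impI)
    show "length (Js[p := insert i (Js ! p)]) = k" using L by simp
    show "Js[p := insert i (Js ! p)] ! j \<noteq> {}" if "j < k" for j
      using that ne L assms(2) by (cases "j = p") auto
    show "Js[p := insert i (Js ! p)] ! a \<inter> Js[p := insert i (Js ! p)] ! b = {}"
      if "a < k" "b < k" "a \<noteq> b" for a b
      using that L dj sub assms(2) by (cases "a = p"; cases "b = p") (auto simp: nth_list_update)
    show "\<Union>(set (Js[p := insert i (Js ! p)])) = insert i R"
    proof
      show "\<Union>(set (Js[p := insert i (Js ! p)])) \<subseteq> insert i R"
      proof
        fix x assume "x \<in> \<Union>(set (Js[p := insert i (Js ! p)]))"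
        then obtain j where j: "j < k" "x \<in> Js[p := insert i (Js ! p)] ! j"
          using L by (auto simp: in_set_conv_nth)
        then show "x \<in> insert i R" using osp_sub[OF assms(1)] assms(2) L
          by (cases "j = p") (auto simp: nth_list_update)
      qed
      show "insert i R \<subseteq> \<Union>(set (Js[p := insert i (Js ! p)]))"
      proof
        fix x assume "x \<in> insert i R"
        then obtain j where j: "j < k" "x \<in> Js[p := insert i (Js ! p)] ! j"
        proof
          assume "x = i" then show ?thesis using that[of p] assms(2) L by simp
        next
          assume "x \<in> R"
          then obtain j where "j < k" "x \<in> Js ! j" using osp_cover[OF assms(1)] by blast
          then show ?thesis using that[of j] L by (cases "j = p") (auto simp: nth_list_update)
        qed
        then show "x \<in> \<Union>(set (Js[p := insert i (Js ! p)]))" using L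
          by (metis UnionI length_list_update nth_mem)
      qed
    qed
  qed
qed


lemma del_osp:
  assumes "Is \<in> osp (insert i R) k" "p < k" "i \<in> Is ! p" "Is ! p \<noteq> {i}" "i \<notin> R"
  shows "Is[p := Is ! p - {i}] \<in> osp R k"
proof -
  have L: "length Is = k" using assms(1) by (simp add: osp_def)
  have ne: "\<And>j. j < k \<Longrightarrow> Is ! j \<noteq> {}" using assms(1) by (simp add: osp_def)
  have dj: "\<And>a b. a < k \<Longrightarrow> b < k \<Longrightarrow> a \<noteq> b \<Longrightarrow> Is ! a \<inter> Is ! b = {}"
    using assms(1) by (simp add: osp_def)
  have sub: "\<And>j. j < k \<Longrightarrow> Is ! j \<subseteq> insert i R" using osp_sub[OF assms(1)] by blast
  have ni: "\<And>j. j < k \<Longrightarrow> j \<noteq> p \<Longrightarrow> i \<notin> Is ! j" using dj assms(2,3) by blast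
  show ?thesis unfolding osp_def
  proof (intro CollectI conjI allI impI)
    show "length (Is[p := Is ! p - {i}]) = k" using L by simp
    show "Is[p := Is ! p - {i}] ! j \<noteq> {}" if "j < k" for j
      using that ne L assms(2,3,4) by (cases "j = p") auto
    show "Is[p := Is ! p - {i}] ! a \<inter> Is[p := Is ! p - {i}] ! b = {}"
      if "a < k" "b < k" "a \<noteq> b" for a b
      using that L dj assms(2) by (cases "a = p"; cases "b = p") (auto simp: nth_list_update)
    show "\<Union>(set (Is[p := Is ! p - {i}])) = R"
    proof
      show "\<Union>(set (Is[p := Is ! p - {i}])) \<subseteq> R"
      proof
        fix x assume "x \<in> \<Union>(set (Is[p := Is ! p - {i}]))"
        then obtain j where j: "j < k" "x \<in> Is[p := Is ! p - {i}] ! j"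
          using L by (auto simp: in_set_conv_nth)
        then show "x \<in> R" using sub ni assms(2) L
          by (cases "j = p") (auto simp: nth_list_update)
      qed
      show "R \<subseteq> \<Union>(set (Is[p := Is ! p - {i}]))"
      proof
        fix x assume x: "x \<in> R"
        then obtain j where j: "j < k" "x \<in> Is ! j" using osp_cover[OF assms(1)] by blast
        then have "x \<in> Is[p := Is ! p - {i}] ! j" using x assms(5) L by (cases "j = p") auto
        then show "x \<in> \<Union>(set (Is[p := Is ! p - {i}]))" using L j
          by (metis UnionI length_list_update nth_mem)
      qed
    qed
  qed
qed

lemma ins_has: "{i} \<in> set (ins p {i} Js)"
  by (simp add: set_ins)

lemma upd_not_has:
  assumes "Js \<in> osp R k" "p < k" "i \<notin> R"
  shows "{i} \<notin> set (Js[p := insert i (Js ! p)])"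
proof
  assume "{i} \<in> set (Js[p := insert i (Js ! p)])"
  then obtain j where j: "j < k" "Js[p := insert i (Js ! p)] ! j = {i}"
    using assms(1) by (auto simp: in_set_conv_nth osp_def)
  have sub: "\<And>j. j < k \<Longrightarrow> i \<notin> Js ! j" using osp_sub[OF assms(1)] assms(3) by blast
  have ne: "Js ! p \<noteq> {}" using assms(1,2) by (simp add: osp_def)
  show False
  proof (cases "j = p")
    case True
    then have "insert i (Js ! p) = {i}" using j assms(1,2) by (simp add: osp_def)
    then show False using ne sub[OF assms(2)] by auto
  next
    case False
    then have "Js ! j = {i}" using j by simp
    then show False using sub[OF j(1)] by simp
  qed
qed


definition w :: "(nat \<Rightarrow> real) \<Rightarrow> nat set \<Rightarrow> nat \<Rightarrow> real" where
  "w a I d = ((2 * (\<Sum>l\<in>I. a l) + 1) gchoose (2 * d))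
                   * (\<Prod>i=1..card I - 1. (of_nat (2 * d + 1) - 2 * of_nat i))"

definition Q :: "(nat \<Rightarrow> real) \<Rightarrow> nat \<Rightarrow> nat set list \<Rightarrow> nat list \<Rightarrow> real" where
  "Q a k Is ds = (\<Prod>j<k. w a (Is ! j) (ds ! j))"

lemma P_eq: "P g n a = (\<Sum>k=1..n. (-1)^k * fact (2*g - 3 + k) / fact k *
      (\<Sum>Is\<in>osp {1..n} k. \<Sum>ds\<in>weak_compositions k (g - 2 + n). Q a k Is ds))"
  unfolding P_def Q_def w_def osp_n by simp

lemma w_single: "a i = 0 \<Longrightarrow> w a {i} d = (if d = 0 then 1 else 0)"
proof -
  assume "a i = 0"
  have "(1::real) gchoose (2 * d) = of_nat (1 choose (2 * d))"
    using binomial_gbinomial[of 1 "2*d", where 'a=real] by simp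
  then show ?thesis using \<open>a i = 0\<close> by (auto simp: w_def)
qed

lemma w_insert:
  assumes "a i = 0" "i \<notin> I" "finite I" "I \<noteq> {}"
  shows "w a (insert i I) d = w a I d * (of_nat (2 * d + 1) - 2 * of_nat (card I))"
proof -
  obtain m where m: "card I = Suc m" using assms(3,4) by (cases "card I") auto
  have s: "(\<Sum>l\<in>insert i I. a l) = (\<Sum>l\<in>I. a l)" using assms by simp
  have c: "card (insert i I) = Suc (Suc m)" using assms m by simp
  show ?thesis unfolding w_def s c m
    by (simp add: prod.nat_ivl_Suc' mult.assoc mult.commute mult.left_commute)
qed

lemma prod_ins_split:
  fixes g :: "nat \<Rightarrow> real"
  assumes "p \<le> k"
  shows "(\<Prod>j<Suc k. g j) = g p * (\<Prod>j<k. g (if j < p then j else Suc j))"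
proof -
  have "(\<Prod>j<Suc k. g j) = g p * (\<Prod>j\<in>{..<Suc k} - {p}. g j)"
    using assms by (subst prod.remove[of _ p]) auto
  also have "(\<Prod>j\<in>{..<Suc k} - {p}. g j) = (\<Prod>j<k. g (if j < p then j else Suc j))"
    by (rule prod.reindex_bij_witness[where i = "\<lambda>j. if j < p then j else Suc j"
          and j = "\<lambda>j. if j < p then j else j - 1"]) (use assms in auto)
  finally show ?thesis .
qed

lemma Q_ins:
  assumes "length Js = k" "length es = k" "p \<le> k"
  shows "Q a (Suc k) (ins p X Js) (ins p d es) = w a X d * Q a k Js es"
  unfolding Q_def using assms
  by (subst prod_ins_split[OF assms(3)]) (auto simp: nth_ins nth_ins_self intro!: prod.cong)

lemma Q_upd:
  assumes "p < k" "length Js = k"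
  shows "Q a k (Js[p := Y]) ds = w a Y (ds ! p) * (\<Prod>j\<in>{..<k} - {p}. w a (Js ! j) (ds ! j))"
    and "Q a k Js ds = w a (Js ! p) (ds ! p) * (\<Prod>j\<in>{..<k} - {p}. w a (Js ! j) (ds ! j))"
proof -
  show "Q a k (Js[p := Y]) ds = w a Y (ds ! p) * (\<Prod>j\<in>{..<k} - {p}. w a (Js ! j) (ds ! j))"
    unfolding Q_def using assms by (subst prod.remove[of _ p]) (auto intro!: prod.cong)
  show "Q a k Js ds = w a (Js ! p) (ds ! p) * (\<Prod>j\<in>{..<k} - {p}. w a (Js ! j) (ds ! j))"
    unfolding Q_def using assms by (subst prod.remove[of _ p]) auto
qed


lemma wc_finite: "finite (weak_compositions k m)"
proof -
  have "weak_compositions k m \<subseteq> {xs. set xs \<subseteq> {0..m} \<and> length xs = k}"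
    unfolding weak_compositions_def using member_le_sum_list by fastforce
  moreover have "finite {xs. set xs \<subseteq> {0..m} \<and> length xs = k}"
    by (intro finite_lists_length_eq) auto
  ultimately show ?thesis by (rule finite_subset)
qed

lemma sum_list_ins: "sum_list (ins p x xs) = x + (sum_list xs :: nat)"
proof -
  have "sum_list xs = sum_list (take p xs) + sum_list (drop p xs)"
    by (metis append_take_drop_id sum_list_append)
  then show ?thesis by (simp add: ins_def add_ac)
qed

lemma sum_list_rmv: "p < length xs \<Longrightarrow> sum_list (rmv p xs) + xs ! p = (sum_list xs :: nat)"
  by (metis sum_list_ins ins_rmv add.commute)

lemma sumA:
  assumes "a i = 0" "length Js = k" "p \<le> k"
  shows "(\<Sum>ds\<in>weak_compositions (Suc k) N. Q a (Suc k) (ins p {i} Js) ds)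
       = (\<Sum>es\<in>weak_compositions k N. Q a k Js es)"
proof -
  have "(\<Sum>ds\<in>weak_compositions (Suc k) N. Q a (Suc k) (ins p {i} Js) ds)
      = (\<Sum>ds\<in>weak_compositions (Suc k) N. if ds ! p = 0 then Q a k Js (rmv p ds) else 0)"
  proof (rule sum.cong[OF refl])
    fix ds assume "ds \<in> weak_compositions (Suc k) N"
    then have L: "length ds = Suc k" by (simp add: weak_compositions_def)
    then have "ds = ins p (ds ! p) (rmv p ds)" using assms(3) by (simp add: ins_rmv)
    then have "Q a (Suc k) (ins p {i} Js) ds = Q a (Suc k) (ins p {i} Js) (ins p (ds ! p) (rmv p ds))"
      by simp
    also have "\<dots> = w a {i} (ds ! p) * Q a k Js (rmv p ds)"
      using L assms by (intro Q_ins) auto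
    finally show "Q a (Suc k) (ins p {i} Js) ds = (if ds ! p = 0 then Q a k Js (rmv p ds) else 0)"
      using w_single[of a i, OF assms(1)] by simp
  qed
  also have "\<dots> = (\<Sum>ds\<in>{ds \<in> weak_compositions (Suc k) N. ds ! p = 0}. Q a k Js (rmv p ds))"
    by (rule sum.inter_filter[symmetric]) (rule wc_finite)
  also have "\<dots> = (\<Sum>es\<in>weak_compositions k N. Q a k Js es)"
  proof (rule sum.reindex_bij_witness[where i = "ins p 0" and j = "rmv p"])
    fix ds assume "ds \<in> {ds \<in> weak_compositions (Suc k) N. ds ! p = 0}"
    then have L: "length ds = Suc k" "ds ! p = 0" "sum_list ds = N"
      by (auto simp: weak_compositions_def)
    show "ins p 0 (rmv p ds) = ds" using ins_rmv[of p ds] L assms(3) by simp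
    show "rmv p ds \<in> weak_compositions k N"
      using L assms(3) sum_list_rmv[of p ds] by (simp add: weak_compositions_def)
    show "Q a k Js (rmv p ds) = Q a k Js (rmv p ds)" by simp
  next
    fix es assume "es \<in> weak_compositions k N"
    then have L: "length es = k" "sum_list es = N" by (auto simp: weak_compositions_def)
    show "rmv p (ins p 0 es) = es" using rmv_ins[of p es 0] L assms(3) by simp
    show "ins p 0 es \<in> {ds \<in> weak_compositions (Suc k) N. ds ! p = 0}"
      using L assms(3) by (simp add: weak_compositions_def sum_list_ins nth_ins_self)
  qed
  finally show ?thesis .
qed


lemma osp_card:
  assumes "finite R" "Js \<in> osp R k"
  shows "(\<Sum>p<k. card (Js ! p)) = card R"
proof -
  have L: "length Js = k" and U: "\<Union>(set Js) = R" using assms(2) by (auto simp: osp_def)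
  have "\<Union>((!) Js ` {..<k}) = \<Union>(set Js)" using L by (auto simp: set_conv_nth)
  moreover have "card (\<Union>((!) Js ` {..<k})) = (\<Sum>p<k. card (Js ! p))"
    by (rule card_UN_disjoint) (use assms osp_sub[OF assms(2)] in \<open>auto intro: finite_subset simp: osp_def\<close>)
  ultimately show ?thesis using U by simp
qed

lemma osp_empty:
  assumes "finite R" "card R < k"
  shows "osp R k = {}"
proof (rule ccontr)
  assume "osp R k \<noteq> {}"
  then obtain Js where J: "Js \<in> osp R k" by auto
  have "(\<Sum>p<k. 1) \<le> (\<Sum>p<k. card (Js ! p))"
  proof (rule sum_mono)
    fix p assume "p \<in> {..<k}"
    then have "Js ! p \<noteq> {}" "finite (Js ! p)" using J osp_sub[OF J] assms(1)
      by (auto simp: osp_def intro: finite_subset)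
    then show "1 \<le> card (Js ! p)" by (simp add: Suc_le_eq card_gt_0_iff)
  qed
  then show False using osp_card[OF assms(1) J] assms(2) by simp
qed

lemma sumB:
  assumes "a i = 0" "i \<notin> R" "finite R" "Js \<in> osp R k"
  shows "(\<Sum>p<k. \<Sum>ds\<in>weak_compositions k N. Q a k (Js[p := insert i (Js ! p)]) ds)
       = (2 * of_nat N + of_nat k - 2 * of_nat (card R)) * (\<Sum>ds\<in>weak_compositions k N. Q a k Js ds)"
proof -
  have L: "length Js = k" using assms(4) by (simp add: osp_def)
  have step: "Q a k (Js[p := insert i (Js ! p)]) ds
      = Q a k Js ds * (of_nat (2 * (ds ! p) + 1) - 2 * of_nat (card (Js ! p)))" if "p < k" for p ds
  proof -
    have "i \<notin> Js ! p" "finite (Js ! p)" "Js ! p \<noteq> {}"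
      using osp_sub[OF assms(4) that] assms that by (auto simp: osp_def intro: finite_subset)
    then show ?thesis using Q_upd(1)[OF that L, of a "insert i (Js ! p)" ds] Q_upd(2)[OF that L, of a ds] w_insert[of a i "Js ! p"] assms(1)
      by (simp add: mult_ac)
  qed
  have csum: "(\<Sum>p<k. (of_nat (2 * (ds ! p) + 1) - 2 * of_nat (card (Js ! p)) :: real))
      = 2 * of_nat N + of_nat k - 2 * of_nat (card R)" if "ds \<in> weak_compositions k N" for ds
  proof -
    have D: "length ds = k" "sum_list ds = N" using that by (auto simp: weak_compositions_def)
    have "(\<Sum>p<k. ds ! p) = N" using D sum_list_sum_nth[of ds] by (simp add: atLeast0LessThan)
    then have "(\<Sum>p<k. (of_nat (ds ! p) :: real)) = of_nat N" by (metis of_nat_sum)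
    moreover have "(\<Sum>p<k. (of_nat (card (Js ! p)) :: real)) = of_nat (card R)"
      using osp_card[OF assms(3,4)] by (metis of_nat_sum)
    ultimately show ?thesis by (simp add: sum_subtractf sum.distrib sum_distrib_left[symmetric])
  qed
  have "(\<Sum>p<k. \<Sum>ds\<in>weak_compositions k N. Q a k (Js[p := insert i (Js ! p)]) ds)
      = (\<Sum>p<k. \<Sum>ds\<in>weak_compositions k N. Q a k Js ds * (of_nat (2 * (ds ! p) + 1) - 2 * of_nat (card (Js ! p))))"
    using step by simp
  also have "\<dots> = (\<Sum>ds\<in>weak_compositions k N. Q a k Js ds * (\<Sum>p<k. (of_nat (2 * (ds ! p) + 1) - 2 * of_nat (card (Js ! p)))))"
    by (subst sum.swap) (simp add: sum_distrib_left)
  also have "\<dots> = (\<Sum>ds\<in>weak_compositions k N. Q a k Js ds * (2 * of_nat N + of_nat k - 2 * of_nat (card R)))"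
    using csum by simp
  finally show ?thesis by (simp add: sum_distrib_right mult.commute)
qed


definition XX :: "(nat \<Rightarrow> real) \<Rightarrow> nat set \<Rightarrow> nat \<Rightarrow> nat \<Rightarrow> real" where
  "XX a R N k = (\<Sum>Js\<in>osp R k. \<Sum>ds\<in>weak_compositions k N. Q a k Js ds)"

lemma T_split:
  assumes "a i = 0" "i \<notin> R" "finite R"
  shows "(\<Sum>Is\<in>osp (insert i R) (Suc k). \<Sum>ds\<in>weak_compositions (Suc k) N. Q a (Suc k) Is ds)
       = of_nat (Suc k) * XX a R N k
         + (2 * of_nat N + of_nat (Suc k) - 2 * of_nat (card R)) * XX a R N (Suc k)"
proof -
  define G where "G Is = (\<Sum>ds\<in>weak_compositions (Suc k) N. Q a (Suc k) Is ds)" for Is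
  define SS where "SS = osp (insert i R) (Suc k)"
  define Bs where "Bs = {Is :: nat set list. {i} \<in> set Is}"
  have fin: "finite SS" unfolding SS_def using assms(3) by (intro osp_finite) simp
  have "sum G SS = sum G (SS \<inter> Bs) + sum G (SS - Bs)"
    by (rule sum.Int_Diff[OF fin])
  also have "sum G (SS \<inter> Bs) = (\<Sum>(p, Js)\<in>{..<Suc k} \<times> osp R k. G (ins p {i} Js))"
  proof (rule sum.reindex_bij_witness[where i = "\<lambda>(p, Js). ins p {i} Js"
        and j = "\<lambda>Is. (pos i Is, rmv (pos i Is) Is)"])
    fix Is assume "Is \<in> SS \<inter> Bs"
    then have I: "Is \<in> osp (insert i R) (Suc k)" "{i} \<in> set Is" unfolding SS_def Bs_def by auto
    then obtain q where q: "q < Suc k" "Is ! q = {i}" by (auto simp: in_set_conv_nth osp_def)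
    have pq: "pos i Is = q" using pos_eq[OF I(1) q(1)] q(2) by simp
    have L: "length Is = Suc k" using I(1) by (simp add: osp_def)
    show "(case (pos i Is, rmv (pos i Is) Is) of (p, Js) \<Rightarrow> ins p {i} Js) = Is"
      using ins_rmv[of q Is] q L pq by simp
    show "(pos i Is, rmv (pos i Is) Is) \<in> {..<Suc k} \<times> osp R k"
      using rmv_osp[OF I(1) q(1) q(2) assms(2)] pq q by simp
    show "(case (pos i Is, rmv (pos i Is) Is) of (p, Js) \<Rightarrow> G (ins p {i} Js)) = G Is"
      using ins_rmv[of q Is] q L pq by simp
  next
    fix b assume "b \<in> {..<Suc k} \<times> osp R k"
    then obtain p Js where b: "b = (p, Js)" "p < Suc k" "Js \<in> osp R k" by auto
    have L: "length Js = k" using b(3) by (simp add: osp_def)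
    have I: "ins p {i} Js \<in> osp (insert i R) (Suc k)" using ins_osp[OF b(3) _ assms(2)] b(2) by simp
    have "pos i (ins p {i} Js) = p" using pos_eq[OF I b(2)] nth_ins_self[of p Js "{i}"] b(2) L by simp
    then show "(\<lambda>Is. (pos i Is, rmv (pos i Is) Is)) (case b of (p, Js) \<Rightarrow> ins p {i} Js) = b"
      using rmv_ins[of p Js "{i}"] b L by simp
    show "(case b of (p, Js) \<Rightarrow> ins p {i} Js) \<in> SS \<inter> Bs"
      using I b unfolding SS_def Bs_def by (simp add: ins_has)
  qed
  also have "\<dots> = (\<Sum>p<Suc k. \<Sum>Js\<in>osp R k. G (ins p {i} Js))"
    by (rule sum.cartesian_product[symmetric])
  also have "\<dots> = (\<Sum>p<Suc k. XX a R N k)"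
  proof (rule sum.cong[OF refl])
    fix p assume "p \<in> {..<Suc k}"
    then show "(\<Sum>Js\<in>osp R k. G (ins p {i} Js)) = XX a R N k"
      unfolding XX_def G_def using sumA[of a i, OF assms(1)] \<open>p \<in> {..<Suc k}\<close> by (auto simp: osp_def intro!: sum.cong)
  qed
  also have "sum G (SS - Bs) = (\<Sum>(p, Js)\<in>{..<Suc k} \<times> osp R (Suc k). G (Js[p := insert i (Js ! p)]))"
  proof (rule sum.reindex_bij_witness[where i = "\<lambda>(p, Js). Js[p := insert i (Js ! p)]"
        and j = "\<lambda>Is. (pos i Is, Is[pos i Is := Is ! pos i Is - {i}])"])
    fix Is assume "Is \<in> SS - Bs"
    then have I: "Is \<in> osp (insert i R) (Suc k)" "{i} \<notin> set Is" unfolding SS_def Bs_def by auto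
    then obtain q where q: "q < Suc k" "i \<in> Is ! q" using osp_cover[OF I(1)] by blast
    have pq: "pos i Is = q" using pos_eq[OF I(1) q] by simp
    have L: "length Is = Suc k" using I(1) by (simp add: osp_def)
    have ne: "Is ! q \<noteq> {i}" using I(2) q L by (metis nth_mem)
    show "(case (pos i Is, Is[pos i Is := Is ! pos i Is - {i}]) of
           (p, Js) \<Rightarrow> Js[p := insert i (Js ! p)]) = Is"
      using q L pq by (simp add: insert_absorb)
    show "(pos i Is, Is[pos i Is := Is ! pos i Is - {i}]) \<in> {..<Suc k} \<times> osp R (Suc k)"
      using del_osp[OF I(1) q ne assms(2)] pq q by simp
    show "(case (pos i Is, Is[pos i Is := Is ! pos i Is - {i}]) of
           (p, Js) \<Rightarrow> G (Js[p := insert i (Js ! p)])) = G Is"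
      using q L pq by (simp add: insert_absorb)
  next
    fix b assume "b \<in> {..<Suc k} \<times> osp R (Suc k)"
    then obtain p Js where b: "b = (p, Js)" "p < Suc k" "Js \<in> osp R (Suc k)" by auto
    have L: "length Js = Suc k" using b(3) by (simp add: osp_def)
    have I: "Js[p := insert i (Js ! p)] \<in> osp (insert i R) (Suc k)" using upd_osp[OF b(3) b(2) assms(2)] .
    have ni: "i \<notin> Js ! p" using osp_sub[OF b(3) b(2)] assms(2) by blast
    have "pos i (Js[p := insert i (Js ! p)]) = p" using pos_eq[OF I b(2)] b(2) L by simp
    then show "(\<lambda>Is. (pos i Is, Is[pos i Is := Is ! pos i Is - {i}])) (case b of (p, Js) \<Rightarrow> Js[p := insert i (Js ! p)]) = b"
      using b L ni by simp
    show "(case b of (p, Js) \<Rightarrow> Js[p := insert i (Js ! p)]) \<in> SS - Bs"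
      using I b upd_not_has[OF b(3) b(2) assms(2)] unfolding SS_def Bs_def by simp
  qed
  also have "\<dots> = (\<Sum>p<Suc k. \<Sum>Js\<in>osp R (Suc k). G (Js[p := insert i (Js ! p)]))"
    by (rule sum.cartesian_product[symmetric])
  also have "\<dots> = (\<Sum>Js\<in>osp R (Suc k). \<Sum>p<Suc k. G (Js[p := insert i (Js ! p)]))"
    by (rule sum.swap)
  also have "\<dots> = (\<Sum>Js\<in>osp R (Suc k). (2 * of_nat N + of_nat (Suc k) - 2 * of_nat (card R))
                     * (\<Sum>ds\<in>weak_compositions (Suc k) N. Q a (Suc k) Js ds))"
    unfolding G_def by (rule sum.cong[OF refl]) (rule sumB[of a i R, OF assms], assumption)
  finally show ?thesis unfolding G_def SS_def XX_def by (simp add: sum_distrib_left)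
qed


theorem proposition5p3:
  fixes g n i :: nat and a :: "nat \<Rightarrow> real"
  assumes "g \<ge> 2" and "n \<ge> 2" and "i \<in> {1..n}" and "a i = 0"
  shows "P g n a = 0"
proof -
  define R where "R = {1..n} - {i}"
  define N where "N = g - 2 + n"
  have S: "{1..n} = insert i R" using assms(3) unfolding R_def by auto
  have iR: "i \<notin> R" and finR: "finite R" unfolding R_def by auto
  have cR: "card R = n - 1" unfolding R_def using assms(3) by simp
  define u where "u k = (-1)^k * fact (2*g - 2 + k) / fact k * XX a R N k" for k
  have X0: "XX a R N 0 = 0"
  proof -
    have "R \<noteq> {}" using cR assms(2) by (metis card.empty diff_is_0_eq le_numeral_extra(4) one_le_numeral Suc_1 not_less_eq_eq)
    then have "osp R 0 = {}" by (auto simp: osp_def)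
    then show ?thesis by (simp add: XX_def)
  qed
  have Xn: "XX a R N n = 0"
    using osp_empty[OF finR, of n] cR assms(2) by (simp add: XX_def)
  have tm: "(-1)^(Suc m) * fact (2*g - 3 + Suc m) / fact (Suc m) *
      (\<Sum>Is\<in>osp {1..n} (Suc m). \<Sum>ds\<in>weak_compositions (Suc m) N. Q a (Suc m) Is ds)
      = u (Suc m) - u m" for m
  proof -
    have e1: "2*g - 3 + Suc m = 2*g - 2 + m" using assms(1) by simp
    have e2: "2 * real N + real (Suc m) - 2 * real (card R) = real (Suc (2*g - 2 + m))"
      using assms(1,2) cR unfolding N_def by (simp add: of_nat_diff)
    have e3: "fact (2*g - 2 + Suc m) = (real (Suc (2*g - 2 + m))) * fact (2*g - 2 + m)"
      by (simp add: algebra_simps)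
    have fm: "fact m \<noteq> (0::real)" by simp
    have mm: "real (Suc m) \<noteq> 0" by simp
    have alg: "\<And>(s::real) F A B c M fm. fm \<noteq> 0 \<Longrightarrow> M \<noteq> 0 \<Longrightarrow>
        - (s * F) / (M * fm) * (M * A + c * B) = - (s * (c * F)) / (M * fm) * B - s * F / fm * A"
      by (simp add: field_simps)
    show ?thesis
      unfolding S T_split[of a i R, OF assms(4) iR finR] e1 e2 u_def e3 fact_Suc power_Suc
      by (simp only: of_nat_mult mult_minus_left mult_1_left) (rule alg[OF fm mm])
  qed
  have "P g n a = (\<Sum>k=1..n. (-1)^k * fact (2*g - 3 + k) / fact k *
      (\<Sum>Is\<in>osp {1..n} k. \<Sum>ds\<in>weak_compositions k N. Q a k Is ds))"
    unfolding P_eq N_def ..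
  also have "\<dots> = (\<Sum>m<n. u (Suc m) - u m)"
  proof -
    define f where "f k = (-1)^k * fact (2*g - 3 + k) / fact k *
      (\<Sum>Is\<in>osp {1..n} k. \<Sum>ds\<in>weak_compositions k N. Q a k Is ds)" for k
    have "sum f {1..n} = (\<Sum>m<n. f (Suc m))"
      using sum.atLeast1_atMost_eq[of f n] by simp
    also have "\<dots> = (\<Sum>m<n. u (Suc m) - u m)" unfolding f_def using tm by simp
    finally show ?thesis unfolding f_def .
  qed
  also have "\<dots> = u n - u 0" by (rule sum_lessThan_telescope)
  also have "\<dots> = 0" using X0 Xn by (simp add: u_def)
  finally show ?thesis .
qed

end
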